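(* Let $L$ be a finite-dimensional Lie algebra over any field $F$ which has the one-and-a-half generation property. Then every proper non-zero semi-modular subalgebra of $L$ is a modular maximal subalgebra of $L$.
   Context: $L$ has the one-and-a-half generation property if for every $0\ne x\in L$ there is $y\in L$ with $\langle x,y\rangle=L$, where $\langle\,\cdot\,\rangle$ denotes the generated subalgebra. A subalgebra $B$ covers a subalgebra $A$ if $A$ is a maximal subalgebra of $B$. A subalgebra $U$ is modular in $L$ if $\langle U,B\rangle\cap C=\langle B,U\cap C\rangle$ for all subalgebras $B\subseteq C$ of $L$, and $\langle U,B\rangle\cap C=\langle B\cap C,U\rangle$ for all subalgebras $B,C$ of $L$ with $U\subseteq C$. $U$ is upper modular (um) in $L$ if whenever $B$ is a subalgebra of $L$ which covers $U\cap B$, then $\langle U,B\rangle$ covers $U$; $U$ is lower modular (lm) in $L$ if whenever $B$ is a subalgebra of $L$ such that $\langle U,B\rangle$ covers $U$, then $B$ covers $U\cap B$; $U$ is semi-modular (sm) in $L$ if it is both um and lm. *)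

theory Defs
  imports Complex_Main
begin

text \<open>A Lie algebra over a field: the carrier is the whole type 'v, scalars come from
  a field 'a, scale is scalar multiplication and br is the Lie bracket.\<close>

definition lie_algebra :: "('a::field \<Rightarrow> 'v::ab_group_add \<Rightarrow> 'v) \<Rightarrow> ('v \<Rightarrow> 'v \<Rightarrow> 'v) \<Rightarrow> bool" where
  "lie_algebra scale br \<longleftrightarrow>
     Vector_Spaces.vector_space scale \<and>
     (\<forall>x y z. br (x + y) z = br x z + br y z) \<and>
     (\<forall>x y z. br x (y + z) = br x y + br x z) \<and>
     (\<forall>c x y. br (scale c x) y = scale c (br x y)) \<and>
     (\<forall>c x y. br x (scale c y) = scale c (br x y)) \<and>
     (\<forall>x. br x x = 0) \<and>
     (\<forall>x y z. br x (br y z) + br y (br z x) + br z (br x y) = 0)"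

definition fin_dim_lie :: "('a::field \<Rightarrow> 'v::ab_group_add \<Rightarrow> 'v) \<Rightarrow> bool" where
  "fin_dim_lie scale \<longleftrightarrow> (\<exists>B. finite B \<and> Modules.module.span scale B = UNIV)"

definition lie_subalgebra :: "('a::field \<Rightarrow> 'v::ab_group_add \<Rightarrow> 'v) \<Rightarrow> ('v \<Rightarrow> 'v \<Rightarrow> 'v) \<Rightarrow> 'v set \<Rightarrow> bool" where
  "lie_subalgebra scale br A \<longleftrightarrow> Modules.module.subspace scale A \<and> (\<forall>x\<in>A. \<forall>y\<in>A. br x y \<in> A)"

definition gen :: "('a::field \<Rightarrow> 'v::ab_group_add \<Rightarrow> 'v) \<Rightarrow> ('v \<Rightarrow> 'v \<Rightarrow> 'v) \<Rightarrow> 'v set \<Rightarrow> 'v set" where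
  "gen scale br S = \<Inter>{A. lie_subalgebra scale br A \<and> S \<subseteq> A}"

definition one_and_half_gen :: "('a::field \<Rightarrow> 'v::ab_group_add \<Rightarrow> 'v) \<Rightarrow> ('v \<Rightarrow> 'v \<Rightarrow> 'v) \<Rightarrow> bool" where
  "one_and_half_gen scale br \<longleftrightarrow> (\<forall>x. x \<noteq> 0 \<longrightarrow> (\<exists>y. gen scale br {x, y} = UNIV))"

definition covers :: "('a::field \<Rightarrow> 'v::ab_group_add \<Rightarrow> 'v) \<Rightarrow> ('v \<Rightarrow> 'v \<Rightarrow> 'v) \<Rightarrow> 'v set \<Rightarrow> 'v set \<Rightarrow> bool" where
  "covers scale br B A \<longleftrightarrow>
     lie_subalgebra scale br A \<and> lie_subalgebra scale br B \<and> A \<subset> B \<and>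
     (\<forall>C. lie_subalgebra scale br C \<and> A \<subseteq> C \<and> C \<subseteq> B \<longrightarrow> C = A \<or> C = B)"

definition maximal_subalgebra :: "('a::field \<Rightarrow> 'v::ab_group_add \<Rightarrow> 'v) \<Rightarrow> ('v \<Rightarrow> 'v \<Rightarrow> 'v) \<Rightarrow> 'v set \<Rightarrow> bool" where
  "maximal_subalgebra scale br U \<longleftrightarrow> covers scale br UNIV U"

definition modular :: "('a::field \<Rightarrow> 'v::ab_group_add \<Rightarrow> 'v) \<Rightarrow> ('v \<Rightarrow> 'v \<Rightarrow> 'v) \<Rightarrow> 'v set \<Rightarrow> bool" where
  "modular scale br U \<longleftrightarrow> lie_subalgebra scale br U \<and>
     (\<forall>B C. lie_subalgebra scale br B \<and> lie_subalgebra scale br C \<and> B \<subseteq> C \<longrightarrow>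
        gen scale br (U \<union> B) \<inter> C = gen scale br (B \<union> (U \<inter> C))) \<and>
     (\<forall>B C. lie_subalgebra scale br B \<and> lie_subalgebra scale br C \<and> U \<subseteq> C \<longrightarrow>
        gen scale br (U \<union> B) \<inter> C = gen scale br ((B \<inter> C) \<union> U))"

definition upper_modular :: "('a::field \<Rightarrow> 'v::ab_group_add \<Rightarrow> 'v) \<Rightarrow> ('v \<Rightarrow> 'v \<Rightarrow> 'v) \<Rightarrow> 'v set \<Rightarrow> bool" where
  "upper_modular scale br U \<longleftrightarrow> lie_subalgebra scale br U \<and>
     (\<forall>B. lie_subalgebra scale br B \<and> covers scale br B (U \<inter> B) \<longrightarrow>
        covers scale br (gen scale br (U \<union> B)) U)"

definition lower_modular :: "('a::field \<Rightarrow> 'v::ab_group_add \<Rightarrow> 'v) \<Rightarrow> ('v \<Rightarrow> 'v \<Rightarrow> 'v) \<Rightarrow> 'v set \<Rightarrow> bool" where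
  "lower_modular scale br U \<longleftrightarrow> lie_subalgebra scale br U \<and>
     (\<forall>B. lie_subalgebra scale br B \<and> covers scale br (gen scale br (U \<union> B)) U \<longrightarrow>
        covers scale br B (U \<inter> B))"

definition semi_modular :: "('a::field \<Rightarrow> 'v::ab_group_add \<Rightarrow> 'v) \<Rightarrow> ('v \<Rightarrow> 'v \<Rightarrow> 'v) \<Rightarrow> 'v set \<Rightarrow> bool" where
  "semi_modular scale br U \<longleftrightarrow> upper_modular scale br U \<and> lower_modular scale br U"

end

theory Submission
  imports Defs
begin

context
  fixes scale :: "'a::field \<Rightarrow> 'v::ab_group_add \<Rightarrow> 'v" and br :: "'v \<Rightarrow> 'v \<Rightarrow> 'v"
  assumes M: "module scale"
begin

lemma sub_Inter:
  assumes "\<forall>A\<in>F. lie_subalgebra scale br A"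
  shows "lie_subalgebra scale br (\<Inter>F)"
proof -
  have "module.subspace scale (\<Inter>F)"
    using assms by (intro module.subspace_Inter[OF M]) (simp add: lie_subalgebra_def)
  moreover have "\<forall>x\<in>\<Inter>F. \<forall>y\<in>\<Inter>F. br x y \<in> \<Inter>F"
    using assms by (auto simp: lie_subalgebra_def)
  ultimately show ?thesis by (simp add: lie_subalgebra_def)
qed

lemma sub_UNIV: "lie_subalgebra scale br UNIV"
  by (simp add: lie_subalgebra_def module.subspace_UNIV[OF M])

lemma sub_inter: "lie_subalgebra scale br A \<Longrightarrow> lie_subalgebra scale br B \<Longrightarrow> lie_subalgebra scale br (A \<inter> B)"
  by (simp add: lie_subalgebra_def module.subspace_inter[OF M])

lemma sub_zero: "lie_subalgebra scale br A \<Longrightarrow> 0 \<in> A"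
  by (simp add: lie_subalgebra_def module.subspace_0[OF M])

lemma gen_alg: "lie_subalgebra scale br (gen scale br S)"
  unfolding gen_def by (rule sub_Inter) auto

lemma gen_sup: "S \<subseteq> gen scale br S"
  unfolding gen_def by auto

lemma gen_least: "lie_subalgebra scale br A \<Longrightarrow> S \<subseteq> A \<Longrightarrow> gen scale br S \<subseteq> A"
  unfolding gen_def by auto

lemma gen_mono: "S \<subseteq> T \<Longrightarrow> gen scale br S \<subseteq> gen scale br T"
  by (meson gen_alg gen_least gen_sup order_trans)

lemma gen_id: "lie_subalgebra scale br A \<Longrightarrow> gen scale br A = A"
  by (meson antisym gen_least gen_sup order_refl)

end

lemma maximal_lemma:
  assumes L: "lie_algebra scale br"
    and oh: "one_and_half_gen scale br"
    and U: "lie_subalgebra scale br U"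
    and nU: "U \<noteq> UNIV" and n0: "U \<noteq> {0}"
    and um: "upper_modular scale br U"
  shows "covers scale br UNIV U"
proof -
  interpret vector_space scale using L unfolding lie_algebra_def by blast
  have M: "module scale" using L unfolding lie_algebra_def vector_space_def module_def by auto
  have bl: "\<And>x y c. br (scale c x) y = scale c (br x y)" and br2: "\<And>x y c. br x (scale c y) = scale c (br x y)"
    and bxx: "\<And>x. br x x = 0" using L unfolding lie_algebra_def by blast+
  have sU: "subspace U" using U unfolding lie_subalgebra_def by blast
  obtain x where xU: "x \<in> U" "x \<noteq> 0" using n0 sub_zero[OF M U] by blast
  then obtain y where gy: "gen scale br {x, y} = UNIV" using oh unfolding one_and_half_gen_def by blast
  have yU: "y \<notin> U"
  proof
    assume "y \<in> U"
    then have "gen scale br {x,y} \<subseteq> U" using xU by (intro gen_least[OF M U]) auto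
    then show False using gy nU by auto
  qed
  define Y where "Y = range (\<lambda>c. scale c y)"
  have yY: "y \<in> Y" unfolding Y_def by (metis rangeI scale_one)
  have Ysub: "lie_subalgebra scale br Y"
    unfolding lie_subalgebra_def
  proof (intro conjI ballI)
    show "subspace Y"
    proof (rule subspaceI)
      show "0 \<in> Y" unfolding Y_def by (rule range_eqI[of _ _ 0]) simp
    next
      fix a b assume "a \<in> Y" "b \<in> Y"
      then obtain p q where "a = scale p y" "b = scale q y" unfolding Y_def by auto
      then have "a + b = scale (p + q) y" by (simp add: scale_left_distrib)
      then show "a + b \<in> Y" unfolding Y_def by (metis rangeI)
    next
      fix c a assume "a \<in> Y"
      then obtain p where "a = scale p y" unfolding Y_def by auto
      then have "scale c a = scale (c * p) y" by simp
      then show "scale c a \<in> Y" unfolding Y_def by (metis rangeI)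
    qed
  next
    fix a b assume "a \<in> Y" "b \<in> Y"
    then obtain p q where "a = scale p y" "b = scale q y" unfolding Y_def by auto
    then have "br a b = scale 0 y" by (simp add: bl br2 bxx)
    then show "br a b \<in> Y" unfolding Y_def by (metis rangeI)
  qed
  have UY: "U \<inter> Y = {0}"
  proof (rule ccontr)
    assume "U \<inter> Y \<noteq> {0}"
    moreover have "0 \<in> U \<inter> Y" using sub_zero[OF M U] sub_zero[OF M Ysub] by blast
    ultimately obtain z where z: "z \<in> U" "z \<in> Y" "z \<noteq> 0" by blast
    then obtain c where c: "z = scale c y" unfolding Y_def by auto
    with z have "c \<noteq> 0" by auto
    then have "y = scale (inverse c) z" using c by simp
    then have "y \<in> U" using subspace_scale[OF sU z(1)] by simp
    with yU show False by simp
  qed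
  have cov: "covers scale br Y (U \<inter> Y)"
    unfolding covers_def UY
  proof (intro conjI allI impI)
    show "lie_subalgebra scale br {0}" unfolding lie_subalgebra_def using bxx by auto
    show "lie_subalgebra scale br Y" by (rule Ysub)
    show "{0} \<subset> Y" using yY yU sub_zero[OF M U] sub_zero[OF M Ysub] by auto
  next
    fix C assume C: "lie_subalgebra scale br C \<and> {0} \<subseteq> C \<and> C \<subseteq> Y"
    show "C = {0} \<or> C = Y"
    proof (cases "C = {0}")
      case False
      then obtain z where z: "z \<in> C" "z \<noteq> 0" using C by blast
      then obtain c where c: "z = scale c y" using C unfolding Y_def by auto
      with z have "c \<noteq> 0" by auto
      then have yz: "y = scale (inverse c) z" using c by simp
      have sC: "subspace C" using C unfolding lie_subalgebra_def by blast
      have "y \<in> C" using subspace_scale[OF sC z(1)] yz by simp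
      then have "Y \<subseteq> C" unfolding Y_def using subspace_scale[OF sC] by auto
      then show ?thesis using C by blast
    qed simp
  qed
  have "covers scale br (gen scale br (U \<union> Y)) U"
    using um Ysub cov unfolding upper_modular_def by blast
  moreover have "gen scale br (U \<union> Y) = UNIV"
  proof -
    have "gen scale br {x, y} \<subseteq> gen scale br (U \<union> Y)" using xU yY by (intro gen_mono[OF M]) auto
    then show ?thesis using gy by auto
  qed
  ultimately show ?thesis by simp
qed

theorem theorem2p8:
  fixes scale :: "'a::field \<Rightarrow> 'v::ab_group_add \<Rightarrow> 'v"
    and br :: "'v \<Rightarrow> 'v \<Rightarrow> 'v"
    and U :: "'v set"
  assumes "lie_algebra scale br"
    and "fin_dim_lie scale"
    and "one_and_half_gen scale br"
    and "lie_subalgebra scale br U"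
    and "U \<noteq> UNIV"
    and "U \<noteq> {0}"
    and "semi_modular scale br U"
  shows "modular scale br U \<and> maximal_subalgebra scale br U"
proof -
  note U = assms(4)
  have M: "module scale" using assms(1) unfolding lie_algebra_def vector_space_def module_def by auto
  have um: "upper_modular scale br U" and lm: "lower_modular scale br U"
    using assms(7) unfolding semi_modular_def by auto
  have max: "covers scale br UNIV U"
    by (rule maximal_lemma[OF assms(1) assms(3) U assms(5) assms(6) um])
  have maxC: "\<And>C. lie_subalgebra scale br C \<Longrightarrow> U \<subseteq> C \<Longrightarrow> C = U \<or> C = UNIV"
    using max unfolding covers_def by blast
  have genUB: "\<And>B. \<not> B \<subseteq> U \<Longrightarrow> gen scale br (U \<union> B) = UNIV"
  proof -
    fix B assume "\<not> B \<subseteq> U"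
    then have "gen scale br (U \<union> B) \<noteq> U" using gen_sup[OF M, where S="U \<union> B" and br=br] by blast
    then show "gen scale br (U \<union> B) = UNIV" using maxC[OF gen_alg[OF M, where S="U \<union> B" and br=br]] gen_sup[OF M, where S="U \<union> B" and br=br] by blast
  qed
  have mod1: "\<forall>B C. lie_subalgebra scale br B \<and> lie_subalgebra scale br C \<and> B \<subseteq> C \<longrightarrow>
        gen scale br (U \<union> B) \<inter> C = gen scale br (B \<union> (U \<inter> C))"
  proof (intro allI impI)
    fix B C assume h: "lie_subalgebra scale br B \<and> lie_subalgebra scale br C \<and> B \<subseteq> C"
    have UC: "lie_subalgebra scale br (U \<inter> C)" using sub_inter[OF M] U h by blast
    show "gen scale br (U \<union> B) \<inter> C = gen scale br (B \<union> (U \<inter> C))"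
    proof (cases "B \<subseteq> U")
      case True
      then have "gen scale br (U \<union> B) = U" using gen_id[OF M U] by (simp add: Un_absorb2)
      moreover have "B \<union> (U \<inter> C) = U \<inter> C" using True h by blast
      ultimately show ?thesis using gen_id[OF M UC] by simp
    next
      case False
      have g: "gen scale br (U \<union> B) = UNIV" by (rule genUB[OF False])
      have "gen scale br (U \<union> C) = UNIV" using genUB[of C] False h by blast
      moreover have "\<forall>B. lie_subalgebra scale br B \<and> covers scale br (gen scale br (U \<union> B)) U \<longrightarrow>
        covers scale br B (U \<inter> B)" using lm unfolding lower_modular_def by blast
      ultimately have cC: "covers scale br C (U \<inter> C)" using h max by simp
      let ?G = "gen scale br (B \<union> (U \<inter> C))"
      have G1: "?G \<subseteq> C" using h by (intro gen_least[OF M]) auto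
      have G2: "U \<inter> C \<subseteq> ?G" using gen_sup[OF M, where S="B \<union> (U \<inter> C)" and br=br] by blast
      have G3: "?G \<noteq> U \<inter> C" using False gen_sup[OF M, where S="B \<union> (U \<inter> C)" and br=br] h by blast
      have "\<forall>D. lie_subalgebra scale br D \<and> U \<inter> C \<subseteq> D \<and> D \<subseteq> C \<longrightarrow> D = U \<inter> C \<or> D = C"
        using cC unfolding covers_def by blast
      then have "?G = C" using G1 G2 G3 gen_alg[OF M, where S="B \<union> (U \<inter> C)" and br=br] by blast
      then show ?thesis using g by simp
    qed
  qed
  have mod2: "\<forall>B C. lie_subalgebra scale br B \<and> lie_subalgebra scale br C \<and> U \<subseteq> C \<longrightarrow>
        gen scale br (U \<union> B) \<inter> C = gen scale br ((B \<inter> C) \<union> U)"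
  proof (intro allI impI)
    fix B C assume h: "lie_subalgebra scale br B \<and> lie_subalgebra scale br C \<and> U \<subseteq> C"
    then have "C = U \<or> C = UNIV" using maxC by blast
    then show "gen scale br (U \<union> B) \<inter> C = gen scale br ((B \<inter> C) \<union> U)"
    proof
      assume "C = U"
      moreover have "gen scale br ((B \<inter> U) \<union> U) = U" using gen_id[OF M U] by (simp add: Un_absorb1)
      moreover have "U \<subseteq> gen scale br (U \<union> B)" using gen_sup[OF M, where S="U \<union> B" and br=br] by blast
      ultimately show ?thesis by auto
    next
      assume "C = UNIV"
      then show ?thesis by (simp add: Un_commute)
    qed
  qed
  show ?thesis unfolding modular_def maximal_subalgebra_def using U mod1 mod2 max by blast
qed

end
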